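(* Let $c,d\in P$ with $c<d$. Then $(P;{\rm Low})$ has a primitive positive interpretation in $(P;{\rm Cycl},c,d)$.
   Context: $(P;\leq)$ is the random partial order (Fraïssé limit of all finite partial orders); $x<y$ means $x\leq y\wedge x\ne y$; $x\bot y$ means incomparable; $z\bot xy$ abbreviates $z\bot x\wedge z\bot y$. ${\rm Low}(x,y,z):=(x<y\wedge z\bot xy)\vee(x<z\wedge y\bot xz)$; ${\rm Cycl}(x,y,z):=(x<y\wedge y<z)\vee(y<z\wedge z<x)\vee(z<x\wedge x<y)\vee(x<y\wedge z\bot xy)\vee(y<z\wedge x\bot yz)\vee(z<x\wedge y\bot zx)$. $(P;{\rm Cycl},c,d)$ is the expansion by constants $c,d$. A structure $\Delta$ (domain $D$) has a primitive positive interpretation in $\Gamma$ if there are $n\geq1$ and a surjective partial map $I:P^n\to D$ whose domain, the preimage of equality on $D$, and the preimages of the relations of $\Delta$ are definable in $\Gamma$ by primitive positive formulas ($\exists\bar y$ (conjunction of atomic formulas)). *)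

theory Defs
  imports "HOL-Library.Countable_Set"
begin

definition is_po :: "('a \<Rightarrow> 'a \<Rightarrow> bool) \<Rightarrow> bool" where
  "is_po le \<longleftrightarrow> (\<forall>x. le x x) \<and> (\<forall>x y. le x y \<and> le y x \<longrightarrow> x = y)
     \<and> (\<forall>x y z. le x y \<and> le y z \<longrightarrow> le x z)"

definition is_po_on :: "'b set \<Rightarrow> ('b \<Rightarrow> 'b \<Rightarrow> bool) \<Rightarrow> bool" where
  "is_po_on S r \<longleftrightarrow> (\<forall>x\<in>S. r x x) \<and> (\<forall>x\<in>S. \<forall>y\<in>S. r x y \<and> r y x \<longrightarrow> x = y)
     \<and> (\<forall>x\<in>S. \<forall>y\<in>S. \<forall>z\<in>S. r x y \<and> r y z \<longrightarrow> r x z)"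

text \<open>The random partial order: the Fraisse limit of the class of all finite partial orders,
  i.e. a countable homogeneous partial order into which every finite partial order embeds
  (every finite partial order is isomorphic to one on a finite set of naturals).\<close>
definition random_po :: "('a \<Rightarrow> 'a \<Rightarrow> bool) \<Rightarrow> bool" where
  "random_po le \<longleftrightarrow> is_po le \<and> countable (UNIV :: 'a set)
   \<and> (\<forall>A f. finite A \<and> inj_on f A \<and> (\<forall>x\<in>A. \<forall>y\<in>A. le x y \<longleftrightarrow> le (f x) (f y))
        \<longrightarrow> (\<exists>g. bij g \<and> (\<forall>x y. le x y \<longleftrightarrow> le (g x) (g y)) \<and> (\<forall>x\<in>A. g x = f x)))
   \<and> (\<forall>(S :: nat set) r. finite S \<and> is_po_on S r
        \<longrightarrow> (\<exists>f :: nat \<Rightarrow> 'a. inj_on f S \<and> (\<forall>x\<in>S. \<forall>y\<in>S. r x y \<longleftrightarrow> le (f x) (f y))))"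

definition lt :: "('a \<Rightarrow> 'a \<Rightarrow> bool) \<Rightarrow> 'a \<Rightarrow> 'a \<Rightarrow> bool" where
  "lt le x y \<longleftrightarrow> le x y \<and> x \<noteq> y"

definition incomp :: "('a \<Rightarrow> 'a \<Rightarrow> bool) \<Rightarrow> 'a \<Rightarrow> 'a \<Rightarrow> bool" where
  "incomp le x y \<longleftrightarrow> \<not> le x y \<and> \<not> le y x"

definition Low :: "('a \<Rightarrow> 'a \<Rightarrow> bool) \<Rightarrow> 'a \<Rightarrow> 'a \<Rightarrow> 'a \<Rightarrow> bool" where
  "Low le x y z \<longleftrightarrow>
     (lt le x y \<and> incomp le z x \<and> incomp le z y) \<or> (lt le x z \<and> incomp le y x \<and> incomp le y z)"

definition Cycl :: "('a \<Rightarrow> 'a \<Rightarrow> bool) \<Rightarrow> 'a \<Rightarrow> 'a \<Rightarrow> 'a \<Rightarrow> bool" where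
  "Cycl le x y z \<longleftrightarrow>
     (lt le x y \<and> lt le y z) \<or> (lt le y z \<and> lt le z x) \<or> (lt le z x \<and> lt le x y)
   \<or> (lt le x y \<and> incomp le z x \<and> incomp le z y)
   \<or> (lt le y z \<and> incomp le x y \<and> incomp le x z)
   \<or> (lt le z x \<and> incomp le y z \<and> incomp le y x)"

datatype pp_term = Var nat | CstC | CstD

datatype pp_atom = AR pp_term pp_term pp_term | AEq pp_term pp_term

fun term_vars :: "pp_term \<Rightarrow> nat set" where
  "term_vars (Var i) = {i}" | "term_vars CstC = {}" | "term_vars CstD = {}"

fun atom_vars :: "pp_atom \<Rightarrow> nat set" where
  "atom_vars (AR s t u) = term_vars s \<union> term_vars t \<union> term_vars u"
| "atom_vars (AEq s t) = term_vars s \<union> term_vars t"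

fun eval_term :: "'a \<Rightarrow> 'a \<Rightarrow> 'a list \<Rightarrow> pp_term \<Rightarrow> 'a" where
  "eval_term c d v (Var i) = v ! i"
| "eval_term c d v CstC = c"
| "eval_term c d v CstD = d"

fun holds_atom :: "('a \<Rightarrow> 'a \<Rightarrow> 'a \<Rightarrow> bool) \<Rightarrow> 'a \<Rightarrow> 'a \<Rightarrow> 'a list \<Rightarrow> pp_atom \<Rightarrow> bool" where
  "holds_atom R c d v (AR s t u) = R (eval_term c d v s) (eval_term c d v t) (eval_term c d v u)"
| "holds_atom R c d v (AEq s t) = (eval_term c d v s = eval_term c d v t)"

text \<open>A k-ary relation (set of k-tuples, as lists of length k) is pp-definable in
  (UNIV; R, c, d): it is defined by \<exists>y_1..y_m. (conjunction of atoms) where the free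
  variables are 0..k-1 and the quantified ones are k..k+m-1.\<close>
definition pp_definable :: "('a \<Rightarrow> 'a \<Rightarrow> 'a \<Rightarrow> bool) \<Rightarrow> 'a \<Rightarrow> 'a \<Rightarrow> nat \<Rightarrow> 'a list set \<Rightarrow> bool" where
  "pp_definable R c d k Rel \<longleftrightarrow> Rel \<subseteq> {xs. length xs = k} \<and>
     (\<exists>(m::nat) (atoms :: pp_atom list).
        (\<forall>a\<in>set atoms. \<forall>i\<in>atom_vars a. i < k + m) \<and>
        (\<forall>xs. length xs = k \<longrightarrow>
           (xs \<in> Rel \<longleftrightarrow> (\<exists>ys. length ys = m \<and> (\<forall>a\<in>set atoms. holds_atom R c d (xs @ ys) a)))))"

definition pp_interpretable ::
  "('a \<Rightarrow> 'a \<Rightarrow> 'a \<Rightarrow> bool) \<Rightarrow> 'a \<Rightarrow> 'a \<Rightarrow> ('b \<Rightarrow> 'b \<Rightarrow> 'b \<Rightarrow> bool) \<Rightarrow> bool" where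
  "pp_interpretable R c d S \<longleftrightarrow>
     (\<exists>(n::nat) (I :: 'a list \<Rightarrow> 'b option). n \<ge> 1 \<and>
        (let Dom = {xs. length xs = n \<and> I xs \<noteq> None} in
          (\<forall>b. \<exists>xs\<in>Dom. I xs = Some b) \<and>
          pp_definable R c d n Dom \<and>
          pp_definable R c d (2 * n)
            {xs @ ys | xs ys. xs \<in> Dom \<and> ys \<in> Dom \<and> I xs = I ys} \<and>
          pp_definable R c d (3 * n)
            {xs @ ys @ zs | xs ys zs. xs \<in> Dom \<and> ys \<in> Dom \<and> zs \<in> Dom \<and>
               S (the (I xs)) (the (I ys)) (the (I zs))}))"

end

theory Submission
  imports Defs
begin


lemma po_refl: "is_po le \<Longrightarrow> le x x" unfolding is_po_def by blast
lemma po_antisym: "is_po le \<Longrightarrow> le x y \<Longrightarrow> le y x \<Longrightarrow> x = y" unfolding is_po_def by blast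
lemma po_trans: "is_po le \<Longrightarrow> le x y \<Longrightarrow> le y z \<Longrightarrow> le x z" unfolding is_po_def by blast

lemma rp_po: "random_po le \<Longrightarrow> is_po le"
  unfolding random_po_def by (elim conjE) assumption
lemma rp_count: "random_po (le :: 'a \<Rightarrow> 'a \<Rightarrow> bool) \<Longrightarrow> countable (UNIV :: 'a set)"
  unfolding random_po_def by (elim conjE) assumption
lemma rp_h: "random_po (le :: 'a \<Rightarrow> 'a \<Rightarrow> bool) \<Longrightarrow> \<forall>A f. finite A \<and> inj_on f A \<and> (\<forall>x\<in>A. \<forall>y\<in>A. le x y \<longleftrightarrow> le (f x) (f y))
        \<longrightarrow> (\<exists>g. bij g \<and> (\<forall>x y. le x y \<longleftrightarrow> le (g x) (g y)) \<and> (\<forall>x\<in>A. g x = f x))"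
  unfolding random_po_def by (elim conjE) assumption
lemma rp_u: "random_po (le :: 'a \<Rightarrow> 'a \<Rightarrow> bool) \<Longrightarrow> \<forall>(S :: nat set) r. finite S \<and> is_po_on S r
        \<longrightarrow> (\<exists>f :: nat \<Rightarrow> 'a. inj_on f S \<and> (\<forall>x\<in>S. \<forall>y\<in>S. r x y \<longleftrightarrow> le (f x) (f y)))"
  unfolding random_po_def by (elim conjE) assumption

lemma rp_univ: "random_po le \<Longrightarrow> finite (S::nat set) \<Longrightarrow> is_po_on S r \<Longrightarrow>
   \<exists>f :: nat \<Rightarrow> 'a. inj_on f S \<and> (\<forall>x\<in>S. \<forall>y\<in>S. r x y \<longleftrightarrow> le (f x) (f y))"
  using rp_u by blast

lemma rp_hom: "random_po (le :: 'a \<Rightarrow> 'a \<Rightarrow> bool) \<Longrightarrow> finite A \<Longrightarrow> inj_on f A \<Longrightarrow> (\<forall>x\<in>A. \<forall>y\<in>A. le x y \<longleftrightarrow> le (f x) (f y))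
   \<Longrightarrow> \<exists>g. bij g \<and> (\<forall>x y. le x y \<longleftrightarrow> le (g x) (g y)) \<and> (\<forall>x\<in>A. g x = f x)"
  using rp_h by blast

lemma ext_point:
  assumes rp: "random_po le" and fin: "finite F" and LH: "L \<subseteq> F" "H \<subseteq> F" "L \<inter> H = {}"
    and Ld: "\<forall>a\<in>F. \<forall>l\<in>L. le a l \<longrightarrow> a \<in> L"
    and Hu: "\<forall>a\<in>F. \<forall>h\<in>H. le h a \<longrightarrow> a \<in> H"
    and LHle: "\<forall>l\<in>L. \<forall>h\<in>H. le l h"
  shows "\<exists>w. w \<notin> F \<and> (\<forall>a\<in>F. le a w \<longleftrightarrow> a \<in> L) \<and> (\<forall>a\<in>F. le w a \<longleftrightarrow> a \<in> H)"
proof -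
  have po: "is_po le" using rp_po[OF rp] .
  obtain fs where fs: "set fs = F" "distinct fs" using finite_distinct_list[OF fin] by blast
  define k where "k = length fs"
  define r where "r = (\<lambda>i j. if i < k \<and> j < k then le (fs!i) (fs!j) else if i < k \<and> j = k then fs!i \<in> L
      else if i = k \<and> j < k then fs!j \<in> H else i = k \<and> j = k)"
  have inF: "i < k \<Longrightarrow> fs!i \<in> F" for i using fs k_def by auto
  have po_r: "is_po_on {..k} r"
    unfolding is_po_on_def
  proof (intro conjI ballI impI)
    fix x assume "x \<in> {..k}" then show "r x x" using po_refl[OF po] by (auto simp: r_def)
  next
    fix x y assume xy: "x \<in> {..k}" "y \<in> {..k}" "r x y \<and> r y x"
    show "x = y"
    proof (cases "x < k \<and> y < k")
      case True
      then have "fs!x = fs!y" using xy po_antisym[OF po] by (auto simp: r_def)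
      then show ?thesis using True fs(2) k_def nth_eq_iff_index_eq by blast
    next
      case False
      have xk: "x \<le> k" "y \<le> k" using xy by auto
      have rr: "r x y" "r y x" using xy by auto
      show ?thesis
      proof (cases "x<k")
        case True then have "y = k" using False xk by auto
        then show ?thesis using rr True LH(3) by (simp add: r_def; blast)
      next
        case f2: False then have "x = k" using xk by auto
        show ?thesis
        proof (cases "y < k")
          case True then show ?thesis using rr \<open>x = k\<close> LH(3) by (simp add: r_def; blast)
        next
          case False then show ?thesis using xk \<open>x = k\<close> by simp
        qed
      qed
    qed
  next
    fix x y z assume xyz: "x \<in> {..k}" "y \<in> {..k}" "z \<in> {..k}" "r x y \<and> r y z"
    show "r x z"
    proof -
      have xk: "x \<le> k" "y \<le> k" "z \<le> k" using xyz(1-3) by auto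
      have rxy: "r x y" and ryz: "r y z" using xyz(4) by auto
      show ?thesis
      proof (cases "x<k"; cases "y<k"; cases "z<k")
        assume "x<k" "y<k" "z<k" then show ?thesis using rxy ryz po_trans[OF po] by (simp add: r_def; blast)
      next
        assume "x<k" "y<k" "\<not>z<k" then show ?thesis using rxy ryz xk Ld inF by (simp add: r_def; blast)
      next
        assume "x<k" "\<not>y<k" "z<k" then show ?thesis using rxy ryz xk LHle by (simp add: r_def; blast)
      next
        assume "x<k" "\<not>y<k" "\<not>z<k" then show ?thesis using rxy ryz xk by (simp add: r_def)
      next
        assume "\<not>x<k" "y<k" "z<k" then show ?thesis using rxy ryz xk Hu inF by (simp add: r_def; blast)
      next
        assume "\<not>x<k" "y<k" "\<not>z<k" then show ?thesis using rxy ryz xk by (simp add: r_def)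
      next
        assume "\<not>x<k" "\<not>y<k" "z<k" then show ?thesis using rxy ryz xk by (simp add: r_def)
      next
        assume "\<not>x<k" "\<not>y<k" "\<not>z<k" then show ?thesis using rxy ryz xk by (simp add: r_def)
      qed
    qed
  qed
  obtain f :: "nat \<Rightarrow> 'a" where f: "inj_on f {..k}" "\<forall>x\<in>{..k}. \<forall>y\<in>{..k}. r x y \<longleftrightarrow> le (f x) (f y)"
    using rp_univ[OF rp _ po_r] by blast
  define A0 where "A0 = f ` {..<k}"
  define m where "m = (\<lambda>p. fs ! (the_inv_into {..<k} f p))"
  have injk: "inj_on f {..<k}" using f(1) by (rule inj_on_subset) auto
  have mf: "i < k \<Longrightarrow> m (f i) = fs ! i" for i
    unfolding m_def using the_inv_into_f_f[OF injk] by simp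
  have injm: "inj_on m A0"
  proof (rule inj_onI)
    fix p q assume "p \<in> A0" "q \<in> A0" "m p = m q"
    then obtain i j where "i < k" "j < k" "p = f i" "q = f j" "fs!i = fs!j" using mf A0_def by auto
    then show "p = q" using fs(2) k_def nth_eq_iff_index_eq by metis
  qed
  have presm: "\<forall>x\<in>A0. \<forall>y\<in>A0. le x y \<longleftrightarrow> le (m x) (m y)"
  proof (intro ballI)
    fix p q assume "p \<in> A0" "q \<in> A0"
    then obtain i j where ij: "i < k" "j < k" "p = f i" "q = f j" using A0_def by auto
    have "r i j \<longleftrightarrow> le (f i) (f j)" using f(2) ij by auto
    moreover have "r i j = le (fs!i) (fs!j)" using ij by (simp add: r_def)
    ultimately show "le p q \<longleftrightarrow> le (m p) (m q)" using mf ij by simp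
  qed
  have finA0: "finite A0" using A0_def by simp
  obtain g where g: "bij g" "\<forall>x y. le x y \<longleftrightarrow> le (g x) (g y)" "\<forall>x\<in>A0. g x = m x"
    using rp_hom[OF rp finA0 injm presm] by blast
  have gf: "i < k \<Longrightarrow> g (f i) = fs ! i" for i using g(3) mf A0_def by auto
  define w where "w = g (f k)"
  have all: "\<And>a. a \<in> F \<Longrightarrow> \<exists>i<k. a = fs ! i" using fs k_def by (metis in_set_conv_nth)
  have 1: "(\<forall>a\<in>F. le a w \<longleftrightarrow> a \<in> L)"
  proof
    fix a assume "a \<in> F" then obtain i where i: "i < k" "a = fs!i" using all by blast
    have "le a w \<longleftrightarrow> le (f i) (f k)" using g(2) gf i w_def by metis
    also have "\<dots> \<longleftrightarrow> r i k" using f(2) i by auto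
    finally show "le a w \<longleftrightarrow> a \<in> L" using i by (simp add: r_def)
  qed
  have 2: "(\<forall>a\<in>F. le w a \<longleftrightarrow> a \<in> H)"
  proof
    fix a assume "a \<in> F" then obtain i where i: "i < k" "a = fs!i" using all by blast
    have "le w a \<longleftrightarrow> le (f k) (f i)" using g(2) gf i w_def by metis
    also have "\<dots> \<longleftrightarrow> r k i" using f(2) i by auto
    finally show "le w a \<longleftrightarrow> a \<in> H" using i by (simp add: r_def)
  qed
  have 3: "w \<notin> F"
  proof
    assume "w \<in> F" then obtain i where i: "i < k" "w = fs!i" using all by blast
    then have "g (f k) = g (f i)" using gf w_def by simp
    then have "f k = f i" using g(1) by (simp add: bij_def inj_eq)
    then have "k = i" using f(1) i(1) by (auto simp: inj_on_def)
    then show False using i by simp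
  qed
  show ?thesis using 1 2 3 by (intro exI[of _ w]) simp
qed



definition pinv :: "('a \<Rightarrow> 'a \<Rightarrow> bool) \<Rightarrow> ('a \<times> 'a) set \<Rightarrow> bool" where
  "pinv le R \<longleftrightarrow> (\<forall>p\<in>R. \<forall>q\<in>R. le (fst p) (fst q) \<longleftrightarrow> le (snd p) (snd q))"

lemma pinv_alt: "pinv le R \<longleftrightarrow> (\<forall>a b a' b'. (a,b) \<in> R \<longrightarrow> (a',b') \<in> R \<longrightarrow> (le a a' \<longleftrightarrow> le b b'))"
proof
  assume h: "pinv le R"
  show "\<forall>a b a' b'. (a,b) \<in> R \<longrightarrow> (a',b') \<in> R \<longrightarrow> (le a a' \<longleftrightarrow> le b b')"
  proof (intro allI impI)
    fix a b a' b' assume ab: "(a,b) \<in> R" "(a',b') \<in> R"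
    have "le (fst (a,b)) (fst (a',b')) \<longleftrightarrow> le (snd (a,b)) (snd (a',b'))"
      using h ab unfolding pinv_def by blast
    then show "le a a' \<longleftrightarrow> le b b'" by simp
  qed
next
  assume h: "\<forall>a b a' b'. (a,b) \<in> R \<longrightarrow> (a',b') \<in> R \<longrightarrow> (le a a' \<longleftrightarrow> le b b')"
  show "pinv le R" unfolding pinv_def
  proof (intro ballI)
    fix p q assume "p \<in> R" "q \<in> R"
    then show "le (fst p) (fst q) \<longleftrightarrow> le (snd p) (snd q)"
      using h[rule_format, of "fst p" "snd p" "fst q" "snd q"] by simp
  qed
qed

lemma pinv_conv: "pinv le (converse R) \<longleftrightarrow> pinv le R"
  unfolding pinv_alt by blast

lemma pinv_fun: assumes "is_po le" "pinv le R" "(a,b) \<in> R" "(a,b') \<in> R" shows "b = b'"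
proof -
  have "le b b'" "le b' b" using assms(2-4) po_refl[OF assms(1)] unfolding pinv_alt by blast+
  then show ?thesis using po_antisym[OF assms(1)] by blast
qed

lemma pinv_inj: assumes "is_po le" "pinv le R" "(a,b) \<in> R" "(a',b) \<in> R" shows "a = a'"
  using pinv_fun[OF assms(1), of "converse R" b a a'] assms pinv_conv by auto

lemma pinv_mono: "pinv le R \<Longrightarrow> S \<subseteq> R \<Longrightarrow> pinv le S"
  unfolding pinv_def by blast

lemma profile:
  assumes po: "is_po le" and pv: "pinv le R" and nx: "x \<notin> fst ` R"
  defines "L \<equiv> {b. \<exists>a. (a,b) \<in> R \<and> le a x}" and "H \<equiv> {b. \<exists>a. (a,b) \<in> R \<and> le x a}"
  shows "L \<subseteq> snd ` R" "H \<subseteq> snd ` R" "L \<inter> H = {}"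
    "\<forall>a\<in>snd ` R. \<forall>l\<in>L. le a l \<longrightarrow> a \<in> L"
    "\<forall>a\<in>snd ` R. \<forall>h\<in>H. le h a \<longrightarrow> a \<in> H"
    "\<forall>l\<in>L. \<forall>h\<in>H. le l h"
    "\<And>w. (\<forall>b\<in>snd ` R. le b w \<longleftrightarrow> b \<in> L) \<Longrightarrow> (\<forall>b\<in>snd ` R. le w b \<longleftrightarrow> b \<in> H) \<Longrightarrow> pinv le (insert (x,w) R)"
proof -
  have key: "(a,b) \<in> R \<Longrightarrow> (a',b') \<in> R \<Longrightarrow> le a a' \<longleftrightarrow> le b b'" for a b a' b'
    using pv unfolding pinv_alt by blast
  show "L \<subseteq> snd ` R" "H \<subseteq> snd ` R" unfolding L_def H_def by force+
  show "L \<inter> H = {}"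
  proof (rule ccontr)
    assume "L \<inter> H \<noteq> {}"
    then obtain b a1 a2 where "(a1,b) \<in> R" "le a1 x" "(a2,b) \<in> R" "le x a2" unfolding L_def H_def by blast
    moreover then have "a1 = a2" using pinv_inj[OF po pv] by blast
    ultimately have "x = a1" using po_antisym[OF po] by blast
    then show False using nx \<open>(a1,b) \<in> R\<close> by force
  qed
  show "\<forall>a\<in>snd ` R. \<forall>l\<in>L. le a l \<longrightarrow> a \<in> L"
  proof (intro ballI impI)
    fix b l assume "b \<in> snd ` R" "l \<in> L" "le b l"
    then obtain a a1 where "(a,b) \<in> R" "(a1,l) \<in> R" "le a1 x" unfolding L_def by force
    then show "b \<in> L" using key \<open>le b l\<close> po_trans[OF po] unfolding L_def by blast
  qed
  show "\<forall>a\<in>snd ` R. \<forall>h\<in>H. le h a \<longrightarrow> a \<in> H"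
  proof (intro ballI impI)
    fix b h assume "b \<in> snd ` R" "h \<in> H" "le h b"
    then obtain a a1 where "(a,b) \<in> R" "(a1,h) \<in> R" "le x a1" unfolding H_def by force
    then show "b \<in> H" using key \<open>le h b\<close> po_trans[OF po] unfolding H_def by blast
  qed
  show "\<forall>l\<in>L. \<forall>h\<in>H. le l h"
  proof (intro ballI)
    fix l h assume "l \<in> L" "h \<in> H"
    then obtain a1 a2 where "(a1,l) \<in> R" "le a1 x" "(a2,h) \<in> R" "le x a2" unfolding L_def H_def by blast
    then show "le l h" using key po_trans[OF po] by blast
  qed
  fix w assume w1: "\<forall>b\<in>snd ` R. le b w \<longleftrightarrow> b \<in> L" and w2: "\<forall>b\<in>snd ` R. le w b \<longleftrightarrow> b \<in> H"
  have A: "(a,b) \<in> R \<Longrightarrow> le a x \<longleftrightarrow> le b w" for a b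
  proof -
    assume ab: "(a,b) \<in> R"
    have "le b w \<longleftrightarrow> b \<in> L" using w1 ab by force
    also have "\<dots> \<longleftrightarrow> le a x" unfolding L_def using ab pinv_inj[OF po pv] by blast
    finally show ?thesis by simp
  qed
  have B: "(a,b) \<in> R \<Longrightarrow> le x a \<longleftrightarrow> le w b" for a b
  proof -
    assume ab: "(a,b) \<in> R"
    have "le w b \<longleftrightarrow> b \<in> H" using w2 ab by force
    also have "\<dots> \<longleftrightarrow> le x a" unfolding H_def using ab pinv_inj[OF po pv] by blast
    finally show ?thesis by simp
  qed
  show "pinv le (insert (x,w) R)"
    unfolding pinv_alt using key A B po_refl[OF po] by auto
qed

definition Jset :: "('a \<Rightarrow> 'a \<Rightarrow> bool) \<Rightarrow> 'a \<Rightarrow> 'a \<Rightarrow> 'a set" where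
  "Jset le c d = {u. lt le c u \<and> lt le u d}"

lemma extend_univ:
  assumes rp: "random_po le" and fin: "finite R" and pv: "pinv le R"
  shows "\<exists>y. pinv le (insert (x,y) R)"
proof (cases "x \<in> fst ` R")
  case True
  then obtain y where "(x,y) \<in> R" by force
  then have "insert (x,y) R = R" by blast
  then show ?thesis using pv by metis
next
  case False
  have po: "is_po le" using rp_po[OF rp] .
  note P = profile[OF po pv False]
  obtain w where "w \<notin> snd ` R"
    "\<forall>a\<in>snd ` R. le a w \<longleftrightarrow> a \<in> {b. \<exists>a. (a,b) \<in> R \<and> le a x}"
    "\<forall>a\<in>snd ` R. le w a \<longleftrightarrow> a \<in> {b. \<exists>a. (a,b) \<in> R \<and> le x a}"
    using ext_point[OF rp _ P(1-6)] fin by blast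
  then show ?thesis using P(7) by blast
qed

lemma extend_J:
  assumes rp: "random_po le" and cd: "lt le c d" and fin: "finite R" and pv: "pinv le R"
    and RJ: "snd ` R \<subseteq> Jset le c d"
  shows "\<exists>y\<in>Jset le c d. pinv le (insert (x,y) R)"
proof (cases "x \<in> fst ` R")
  case True
  then obtain y where "(x,y) \<in> R" by force
  then have "insert (x,y) R = R" "y \<in> Jset le c d" using RJ by force+
  then show ?thesis using pv by metis
next
  case False
  have po: "is_po le" using rp_po[OF rp] .
  define L where "L = {b. \<exists>a. (a,b) \<in> R \<and> le a x}"
  define H where "H = {b. \<exists>a. (a,b) \<in> R \<and> le x a}"
  note P = profile[OF po pv False, folded L_def H_def]
  have cJ: "c \<notin> Jset le c d" "d \<notin> Jset le c d" by (auto simp: Jset_def lt_def)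
  have bJ: "b \<in> snd ` R \<Longrightarrow> lt le c b \<and> lt le b d" for b using RJ by (auto simp: Jset_def)
  have cdne: "c \<noteq> d" "le c d" "\<not> le d c" using cd po_antisym[OF po] by (auto simp: lt_def)
  have ncb: "b \<in> snd ` R \<Longrightarrow> \<not> le b c \<and> \<not> le d b \<and> le c b \<and> le b d \<and> b \<noteq> c \<and> b \<noteq> d" for b
    using bJ[of b] po_antisym[OF po] by (auto simp: lt_def)
  have "\<exists>w. w \<notin> snd ` R \<union> {c,d} \<and> (\<forall>a\<in>snd ` R \<union> {c,d}. le a w \<longleftrightarrow> a \<in> L \<union> {c})
       \<and> (\<forall>a\<in>snd ` R \<union> {c,d}. le w a \<longleftrightarrow> a \<in> H \<union> {d})"
  proof (rule ext_point[OF rp])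
    show "finite (snd ` R \<union> {c, d})" using fin by simp
    show "L \<union> {c} \<subseteq> snd ` R \<union> {c, d}" "H \<union> {d} \<subseteq> snd ` R \<union> {c, d}" using P(1,2) by auto
    show "(L \<union> {c}) \<inter> (H \<union> {d}) = {}" using P(1-3) ncb cdne by auto
    show "\<forall>a\<in>snd ` R \<union> {c, d}. \<forall>l\<in>L \<union> {c}. le a l \<longrightarrow> a \<in> L \<union> {c}"
      using P(1,4) ncb cdne by blast
    show "\<forall>a\<in>snd ` R \<union> {c, d}. \<forall>h\<in>H \<union> {d}. le h a \<longrightarrow> a \<in> H \<union> {d}"
      using P(2,5) ncb cdne by blast
    show "\<forall>l\<in>L \<union> {c}. \<forall>h\<in>H \<union> {d}. le l h"
      using P(1,2,6) ncb cdne po_refl[OF po] by blast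
  qed
  then obtain w where w: "w \<notin> snd ` R \<union> {c,d}" "\<forall>a\<in>snd ` R \<union> {c,d}. le a w \<longleftrightarrow> a \<in> L \<union> {c}"
       "\<forall>a\<in>snd ` R \<union> {c,d}. le w a \<longleftrightarrow> a \<in> H \<union> {d}" by blast
  have wJ: "w \<in> Jset le c d" using w cdne by (auto simp: Jset_def lt_def)
  have "\<forall>b\<in>snd ` R. le b w \<longleftrightarrow> b \<in> L" using w(2) ncb by auto
  moreover have "\<forall>b\<in>snd ` R. le w b \<longleftrightarrow> b \<in> H" using w(3) ncb by auto
  ultimately show ?thesis using P(7) wJ by blast
qed



definition bfstep :: "('a \<Rightarrow> 'a \<Rightarrow> bool) \<Rightarrow> 'a \<Rightarrow> 'a \<Rightarrow> ('a \<times> 'a) set \<Rightarrow> 'a \<Rightarrow> 'a \<Rightarrow> ('a \<times> 'a) set" where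
  "bfstep le c d R x y =
    (let R1 = insert (x, SOME y. pinv le (insert (x, y) R)) R
     in insert (SOME x. x \<in> Jset le c d \<and> pinv le (insert (x, y) R1), y) R1)"

primrec bfseq :: "('a \<Rightarrow> 'a \<Rightarrow> bool) \<Rightarrow> 'a \<Rightarrow> 'a \<Rightarrow> nat \<Rightarrow> ('a \<times> 'a) set" where
  "bfseq le c d 0 = {}"
| "bfseq le c d (Suc n) = bfstep le c d (bfseq le c d n) (from_nat_into (Jset le c d) n) (from_nat_into (UNIV::'a set) n)"

lemma conv_ins: "converse (insert (a,b) R) = insert (b,a) (converse R)" by auto

lemma bfstep_ok:
  assumes rp: "random_po le" and cd: "lt le c d" and fin: "finite R" and pv: "pinv le R"
    and RJ: "fst ` R \<subseteq> Jset le c d" and xJ: "x \<in> Jset le c d"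
  shows "finite (bfstep le c d R x y) \<and> pinv le (bfstep le c d R x y) \<and> fst ` bfstep le c d R x y \<subseteq> Jset le c d
    \<and> R \<subseteq> bfstep le c d R x y \<and> x \<in> fst ` bfstep le c d R x y \<and> y \<in> snd ` bfstep le c d R x y"
proof -
  define y1 where "y1 = (SOME y. pinv le (insert (x, y) R))"
  define R1 where "R1 = insert (x, y1) R"
  have "\<exists>y. pinv le (insert (x, y) R)" using extend_univ[OF rp fin pv] .
  then have p1: "pinv le R1" unfolding R1_def y1_def by (rule someI_ex)
  have f1: "finite R1" "fst ` R1 \<subseteq> Jset le c d" using fin RJ xJ by (auto simp: R1_def)
  have "\<exists>x\<in>Jset le c d. pinv le (insert (y, x) (converse R1))"
    using extend_J[OF rp cd _ _, of "converse R1" y] f1 p1 pinv_conv by force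
  then have "\<exists>x. x \<in> Jset le c d \<and> pinv le (insert (x, y) R1)"
    by (metis conv_ins pinv_conv)
  then have p2: "(SOME x. x \<in> Jset le c d \<and> pinv le (insert (x, y) R1)) \<in> Jset le c d \<and>
      pinv le (insert (SOME x. x \<in> Jset le c d \<and> pinv le (insert (x, y) R1), y) R1)"
    by (rule someI_ex)
  have eq: "bfstep le c d R x y = insert (SOME x. x \<in> Jset le c d \<and> pinv le (insert (x, y) R1), y) R1"
    unfolding bfstep_def R1_def y1_def Let_def ..
  show ?thesis unfolding eq using p2 f1 by (auto simp: R1_def)
qed

lemma J_nonempty:
  assumes rp: "random_po le" and cd: "lt le c d"
  shows "Jset le c d \<noteq> {}"
  using extend_J[OF rp cd, of "{}" c] by (auto simp: pinv_def)

lemma bfseq_ok: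
  assumes rp: "random_po le" and cd: "lt le c d"
  shows "finite (bfseq le c d n) \<and> pinv le (bfseq le c d n) \<and> fst ` bfseq le c d n \<subseteq> Jset le c d"
proof (induction n)
  case 0 then show ?case by (simp add: pinv_def)
next
  case (Suc n)
  have "from_nat_into (Jset le c d) n \<in> Jset le c d" using J_nonempty[OF rp cd] by (rule from_nat_into)
  then show ?case using bfstep_ok[OF rp cd] Suc by simp
qed

lemma bfseq_step:
  assumes rp: "random_po le" and cd: "lt le c d"
  shows "bfseq le c d n \<subseteq> bfseq le c d (Suc n) \<and> from_nat_into (Jset le c d) n \<in> fst ` bfseq le c d (Suc n)
    \<and> from_nat_into (UNIV::'a set) n \<in> snd ` bfseq le c d (Suc n)"
proof -
  have "from_nat_into (Jset le c d) n \<in> Jset le c d" using J_nonempty[OF rp cd] by (rule from_nat_into)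
  then show ?thesis using bfstep_ok[OF rp cd] bfseq_ok[OF rp cd, of n] by simp
qed

lemma iso_exists:
  assumes rp: "random_po le" and cd: "lt le c d"
  shows "\<exists>h. (\<forall>x\<in>Jset le c d. \<forall>y\<in>Jset le c d. le x y \<longleftrightarrow> le (h x) (h y)) \<and> (\<forall>b. \<exists>x\<in>Jset le c d. h x = b)"
proof -
  define S where "S = bfseq le c d"
  define J where "J = Jset le c d"
  define U where "U = (\<Union>n. S n)"
  have po: "is_po le" using rp_po[OF rp] .
  have Jne: "J \<noteq> {}" using J_nonempty[OF rp cd] J_def by simp
  have cU: "countable (UNIV :: 'a set)" using rp_count[OF rp] .
  have cJ: "countable J" using countable_subset[OF _ cU] by blast
  have rJ: "range (from_nat_into J) = J" using range_from_nat_into[OF Jne cJ] .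
  have rU: "range (from_nat_into (UNIV::'a set)) = UNIV" using range_from_nat_into[OF _ cU] by simp
  have mono: "m \<le> n \<Longrightarrow> S m \<subseteq> S n" for m n
    by (rule lift_Suc_mono_le[of S]) (use bfseq_step[OF rp cd] S_def in auto)
  have pvS: "pinv le (S n)" for n using bfseq_ok[OF rp cd] S_def by simp
  have pvU: "pinv le U" unfolding pinv_alt
  proof (intro allI impI)
    fix a b a' b' assume "(a,b) \<in> U" "(a',b') \<in> U"
    then obtain m n where mn: "(a,b) \<in> S m" "(a',b') \<in> S n" unfolding U_def by blast
    then have "(a,b) \<in> S (max m n)" "(a',b') \<in> S (max m n)" using mono[of m "max m n"] mono[of n "max m n"] by auto
    then show "le a a' \<longleftrightarrow> le b b'" using pvS[of "max m n"] unfolding pinv_alt by blast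
  qed
  have fstU: "x \<in> J \<Longrightarrow> \<exists>y. (x,y) \<in> U" for x
  proof -
    assume "x \<in> J" then obtain n where "x = from_nat_into J n" using rJ by (metis rangeE)
    then have "x \<in> fst ` S (Suc n)" using bfseq_step[OF rp cd, of n] S_def J_def by simp
    then show ?thesis unfolding U_def by force
  qed
  have sndU: "\<exists>x. (x,b) \<in> U" for b
  proof -
    obtain n where "b = from_nat_into (UNIV::'a set) n" using rU by (metis rangeE UNIV_I)
    then have "b \<in> snd ` S (Suc n)" using bfseq_step[OF rp cd, of n] S_def by simp
    then show ?thesis unfolding U_def by force
  qed
  have UJ: "(x,y) \<in> U \<Longrightarrow> x \<in> J" for x y
    using bfseq_ok[OF rp cd] unfolding U_def S_def J_def by force
  define h where "h = (\<lambda>x. THE y. (x,y) \<in> U)"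
  have hU: "x \<in> J \<Longrightarrow> (x, h x) \<in> U" for x
  proof -
    assume "x \<in> J" then obtain y where y: "(x,y) \<in> U" using fstU by blast
    have "\<And>y'. (x,y') \<in> U \<Longrightarrow> y' = y" using pinv_fun[OF po pvU] y by blast
    then have "h x = y" unfolding h_def using y by (rule the_equality[rotated])
    then show ?thesis using y by simp
  qed
  have 1: "\<forall>x\<in>J. \<forall>y\<in>J. le x y \<longleftrightarrow> le (h x) (h y)"
    using hU pvU unfolding pinv_alt by blast
  have 2: "\<forall>b. \<exists>x\<in>J. h x = b"
  proof
    fix b obtain x where x: "(x,b) \<in> U" using sndU by blast
    then have "x \<in> J" using UJ by blast
    then have "h x = b" using hU pinv_fun[OF po pvU] x by blast
    then show "\<exists>x\<in>J. h x = b" using \<open>x \<in> J\<close> by blast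
  qed
  show ?thesis using 1 2 J_def by blast
qed



lemma lt_nle: "is_po le \<Longrightarrow> lt le a b \<Longrightarrow> \<not> le b a"
  unfolding lt_def using po_antisym by metis

lemma gadget_fwd:
  assumes po: "is_po le" and J: "lt le c x" "lt le x d" "lt le c y" "lt le y d"
    and a: "Cycl le x y u" "Cycl le x y w" "Cycl le x c w" "Cycl le x d u" "Cycl le y d v"
      "Cycl le y u c" "Cycl le y w v" "Cycl le c v u" "Cycl le c w v" "Cycl le d v u"
  shows "incomp le x y"
proof -
  have "\<not> le x y" using assms unfolding Cycl_def lt_def incomp_def by (smt (verit) po_antisym po_trans)
  moreover have "\<not> le y x" using assms unfolding Cycl_def lt_def incomp_def by (smt (verit) po_antisym po_trans)
  ultimately show ?thesis by (simp add: incomp_def)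
qed

lemma gadget_bwd:
  assumes rp: "random_po le" and cd: "lt le c d" and J: "lt le c x" "lt le x d" "lt le c y" "lt le y d"
    and xy: "incomp le x y"
  shows "\<exists>u v w. Cycl le x y u \<and> Cycl le x y w \<and> Cycl le x c w \<and> Cycl le x d u \<and> Cycl le y d v \<and>
      Cycl le y u c \<and> Cycl le y w v \<and> Cycl le c v u \<and> Cycl le c w v \<and> Cycl le d v u"
proof -
  have po: "is_po le" using rp_po[OF rp] .
  have T: "le c x" "le x d" "le c y" "le y d" "le c d" "\<not> le x c" "\<not> le d x" "\<not> le y c" "\<not> le d y" "\<not> le d c"
    "\<not> le x y" "\<not> le y x" using J cd xy lt_nle[OF po] by (auto simp: lt_def incomp_def)
  have D: "x \<noteq> y" "x \<noteq> c" "x \<noteq> d" "y \<noteq> c" "y \<noteq> d" "c \<noteq> d" using T po_refl[OF po] by metis+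
  obtain u where u: "u \<notin> {x,y,c,d}" "\<forall>a\<in>{x,y,c,d}. le a u \<longleftrightarrow> a \<in> {}" "\<forall>a\<in>{x,y,c,d}. le u a \<longleftrightarrow> a \<in> {x,d}"
    using ext_point[OF rp, of "{x,y,c,d}" "{}" "{x,d}"] T D by auto
  have Tu: "\<not> le x u" "\<not> le y u" "\<not> le c u" "\<not> le d u" "le u x" "\<not> le u y" "\<not> le u c" "le u d"
     "u \<noteq> x" "u \<noteq> y" "u \<noteq> c" "u \<noteq> d" using u D by auto
  obtain v where v: "v \<notin> {x,y,c,d,u}" "\<forall>a\<in>{x,y,c,d,u}. le a v \<longleftrightarrow> a \<in> {c}" "\<forall>a\<in>{x,y,c,d,u}. le v a \<longleftrightarrow> a \<in> {}"
    using ext_point[OF rp, of "{x,y,c,d,u}" "{c}" "{}"] T D Tu by auto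
  have Tv: "\<not> le x v" "\<not> le y v" "le c v" "\<not> le d v" "\<not> le u v" "\<not> le v x" "\<not> le v y" "\<not> le v c" "\<not> le v d" "\<not> le v u"
     "v \<noteq> x" "v \<noteq> y" "v \<noteq> c" "v \<noteq> d" "v \<noteq> u" using v D Tu by auto
  obtain w where w: "w \<notin> {x,y,c,d,u,v}" "\<forall>a\<in>{x,y,c,d,u,v}. le a w \<longleftrightarrow> a \<in> {c}" "\<forall>a\<in>{x,y,c,d,u,v}. le w a \<longleftrightarrow> a \<in> {x,d,v}"
    using ext_point[OF rp, of "{x,y,c,d,u,v}" "{c}" "{x,d,v}"] T D Tu Tv by auto
  have Tw: "\<not> le x w" "\<not> le y w" "le c w" "\<not> le d w" "\<not> le u w" "\<not> le v w"
     "le w x" "\<not> le w y" "\<not> le w c" "le w d" "\<not> le w u" "le w v"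
     "w \<noteq> x" "w \<noteq> y" "w \<noteq> c" "w \<noteq> d" "w \<noteq> u" "w \<noteq> v" using w D Tu Tv by auto
  show ?thesis
    apply (rule exI[of _ u], rule exI[of _ v], rule exI[of _ w])
    using T D Tu Tv Tw by (simp add: Cycl_def lt_def incomp_def)
qed

lemma J_atom: assumes po: "is_po le" and cd: "lt le c d"
  shows "Cycl le d c x \<longleftrightarrow> lt le c x \<and> lt le x d"
  using assms unfolding Cycl_def lt_def incomp_def by (smt (verit) po_antisym po_trans)

lemma L_atom: assumes po: "is_po le" and J: "lt le c x" "lt le x d" "lt le c y" "lt le y d"
  shows "Cycl le c x y \<longleftrightarrow> lt le x y"
  using assms unfolding Cycl_def lt_def incomp_def by (smt (verit) po_antisym po_trans)

lemma pure_fwd: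
  assumes po: "is_po le"
    and a: "Cycl le x y w" "Cycl le x z v" "Cycl le x u w" "Cycl le z u w" "Cycl le z v w"
      "lt le x u" "lt le y w" "lt le z u" "lt le v w" "incomp le x v" "incomp le y z"
  shows "Low le x y z"
  using assms unfolding Low_def Cycl_def lt_def incomp_def by (metis po_trans)

lemma pure_bwd:
  assumes rp: "random_po le" and cd: "lt le c d" and J: "lt le c x" "lt le x d" "lt le c y" "lt le y d"
     "lt le c z" "lt le z d" and L: "Low le x y z"
  shows "\<exists>u v w. lt le c u \<and> lt le u d \<and> lt le c v \<and> lt le v d \<and> lt le c w \<and> lt le w d \<and>
     Cycl le x y w \<and> Cycl le x z v \<and> Cycl le x u w \<and> Cycl le z u w \<and> Cycl le z v w \<and>
      lt le x u \<and> lt le y w \<and> lt le z u \<and> lt le v w \<and> incomp le x v \<and> incomp le y z"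
proof -
  have po: "is_po le" using rp_po[OF rp] .
  have T0: "le c x" "le x d" "le c y" "le y d" "le c z" "le z d" "le c d" "\<not> le x c" "\<not> le d x" "\<not> le y c" "\<not> le d y" 
    "\<not> le z c" "\<not> le d z" "\<not> le d c"
     using J cd lt_nle[OF po] by (auto simp: lt_def)
  have D0: "x \<noteq> c" "x \<noteq> d" "y \<noteq> c" "y \<noteq> d" "z \<noteq> c" "z \<noteq> d" "c \<noteq> d" using T0 po_refl[OF po] by metis+
  consider (A) "lt le x y" "incomp le z x" "incomp le z y" | (B) "lt le x z" "incomp le y x" "incomp le y z"
    using L unfolding Low_def by blast
  then show ?thesis
  proof cases
    case A
    have T: "le x y" "\<not> le y x" "\<not> le x z" "\<not> le z x" "\<not> le y z" "\<not> le z y" using A lt_nle[OF po] by (auto simp: lt_def incomp_def)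
    have D: "x \<noteq> y" "x \<noteq> z" "y \<noteq> z" using T po_refl[OF po] by metis+
    obtain u where u: "u \<notin> {x,y,z,c,d}" "\<forall>a\<in>{x,y,z,c,d}. le a u \<longleftrightarrow> a \<in> {x,z,c}" "\<forall>a\<in>{x,y,z,c,d}. le u a \<longleftrightarrow> a \<in> {d}"
      using ext_point[OF rp, of "{x,y,z,c,d}" "{x,z,c}" "{d}"] T0 D0 T D by auto
    have Tu: "le x u" "\<not> le y u" "le z u" "le c u" "\<not> le d u" "\<not> le u x" "\<not> le u y" "\<not> le u z" "\<not> le u c" "le u d"
       "u \<noteq> x" "u \<noteq> y" "u \<noteq> z" "u \<noteq> c" "u \<noteq> d" using u D0 D by auto
    obtain v where v: "v \<notin> {x,y,z,c,d,u}" "\<forall>a\<in>{x,y,z,c,d,u}. le a v \<longleftrightarrow> a \<in> {z,c}" "\<forall>a\<in>{x,y,z,c,d,u}. le v a \<longleftrightarrow> a \<in> {d}"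
      using ext_point[OF rp, of "{x,y,z,c,d,u}" "{z,c}" "{d}"] T0 D0 T D Tu by auto
    have Tv: "\<not> le x v" "\<not> le y v" "le z v" "le c v" "\<not> le d v" "\<not> le u v" "\<not> le v x" "\<not> le v y" "\<not> le v z" "\<not> le v c" "le v d" "\<not> le v u"
       "v \<noteq> x" "v \<noteq> y" "v \<noteq> z" "v \<noteq> c" "v \<noteq> d" "v \<noteq> u" using v D0 D Tu by auto
    obtain w where w: "w \<notin> {x,y,z,c,d,u,v}" "\<forall>a\<in>{x,y,z,c,d,u,v}. le a w \<longleftrightarrow> a \<in> {x,y,z,c,u,v}" "\<forall>a\<in>{x,y,z,c,d,u,v}. le w a \<longleftrightarrow> a \<in> {d}"
      using ext_point[OF rp, of "{x,y,z,c,d,u,v}" "{x,y,z,c,u,v}" "{d}"] T0 D0 T D Tu Tv by auto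
    have Tw: "le x w" "le y w" "le z w" "le c w" "\<not> le d w" "le u w" "le v w"
       "\<not> le w x" "\<not> le w y" "\<not> le w z" "\<not> le w c" "le w d" "\<not> le w u" "\<not> le w v"
       "w \<noteq> x" "w \<noteq> y" "w \<noteq> z" "w \<noteq> c" "w \<noteq> d" "w \<noteq> u" "w \<noteq> v" using w D0 D Tu Tv by auto
    show ?thesis
      apply (rule exI[of _ u], rule exI[of _ v], rule exI[of _ w])
      using T0 D0 T D Tu Tv Tw by (simp add: Cycl_def lt_def incomp_def)
  next
    case B
    have T: "le x z" "\<not> le z x" "\<not> le x y" "\<not> le y x" "\<not> le y z" "\<not> le z y" using B lt_nle[OF po] by (auto simp: lt_def incomp_def)
    have D: "x \<noteq> y" "x \<noteq> z" "y \<noteq> z" using T po_refl[OF po] by metis+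
    obtain u where u: "u \<notin> {x,y,z,c,d}" "\<forall>a\<in>{x,y,z,c,d}. le a u \<longleftrightarrow> a \<in> {x,z,c}" "\<forall>a\<in>{x,y,z,c,d}. le u a \<longleftrightarrow> a \<in> {d}"
      using ext_point[OF rp, of "{x,y,z,c,d}" "{x,z,c}" "{d}"] T0 D0 T D by auto
    have Tu: "le x u" "\<not> le y u" "le z u" "le c u" "\<not> le d u" "\<not> le u x" "\<not> le u y" "\<not> le u z" "\<not> le u c" "le u d"
       "u \<noteq> x" "u \<noteq> y" "u \<noteq> z" "u \<noteq> c" "u \<noteq> d" using u D0 D by auto
    obtain v where v: "v \<notin> {x,y,z,c,d,u}" "\<forall>a\<in>{x,y,z,c,d,u}. le a v \<longleftrightarrow> a \<in> {c}" "\<forall>a\<in>{x,y,z,c,d,u}. le v a \<longleftrightarrow> a \<in> {d}"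
      using ext_point[OF rp, of "{x,y,z,c,d,u}" "{c}" "{d}"] T0 D0 T D Tu by auto
    have Tv: "\<not> le x v" "\<not> le y v" "\<not> le z v" "le c v" "\<not> le d v" "\<not> le u v" "\<not> le v x" "\<not> le v y" "\<not> le v z" "\<not> le v c" "le v d" "\<not> le v u"
       "v \<noteq> x" "v \<noteq> y" "v \<noteq> z" "v \<noteq> c" "v \<noteq> d" "v \<noteq> u" using v D0 D Tu by auto
    obtain w where w: "w \<notin> {x,y,z,c,d,u,v}" "\<forall>a\<in>{x,y,z,c,d,u,v}. le a w \<longleftrightarrow> a \<in> {y,c,v}" "\<forall>a\<in>{x,y,z,c,d,u,v}. le w a \<longleftrightarrow> a \<in> {d}"
      using ext_point[OF rp, of "{x,y,z,c,d,u,v}" "{y,c,v}" "{d}"] T0 D0 T D Tu Tv by auto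
    have Tw: "\<not> le x w" "le y w" "\<not> le z w" "le c w" "\<not> le d w" "\<not> le u w" "le v w"
       "\<not> le w x" "\<not> le w y" "\<not> le w z" "\<not> le w c" "le w d" "\<not> le w u" "\<not> le w v"
       "w \<noteq> x" "w \<noteq> y" "w \<noteq> z" "w \<noteq> c" "w \<noteq> d" "w \<noteq> u" "w \<noteq> v" using w D0 D Tu Tv by auto
    show ?thesis
      apply (rule exI[of _ u], rule exI[of _ v], rule exI[of _ w])
      using T0 D0 T D Tu Tv Tw by (simp add: Cycl_def lt_def incomp_def)
  qed
qed



definition gad :: "pp_term \<Rightarrow> pp_term \<Rightarrow> pp_term \<Rightarrow> pp_term \<Rightarrow> pp_term \<Rightarrow> pp_atom list" where
  "gad a b p q r = [AR a b p, AR a b r, AR a CstC r, AR a CstD p, AR b CstD q, AR b p CstC, AR b r q,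
     AR CstC q p, AR CstC r q, AR CstD q p]"

definition low_atoms :: "pp_atom list" where
  "low_atoms = [AR CstD CstC (Var 0), AR CstD CstC (Var 1), AR CstD CstC (Var 2), AR CstD CstC (Var 3),
     AR CstD CstC (Var 4), AR CstD CstC (Var 5),
     AR (Var 0) (Var 1) (Var 5), AR (Var 0) (Var 2) (Var 4), AR (Var 0) (Var 3) (Var 5),
     AR (Var 2) (Var 3) (Var 5), AR (Var 2) (Var 4) (Var 5),
     AR CstC (Var 0) (Var 3), AR CstC (Var 1) (Var 5), AR CstC (Var 2) (Var 3), AR CstC (Var 4) (Var 5)]
   @ gad (Var 0) (Var 4) (Var 6) (Var 7) (Var 8) @ gad (Var 1) (Var 2) (Var 9) (Var 10) (Var 11)"

lemma len1: "length xs = 1 \<Longrightarrow> xs = [hd xs]"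
  by (cases xs) auto

lemma len2: "length xs = 2 \<Longrightarrow> xs = [xs!0, xs!1]"
  by (cases xs; cases "tl xs") auto

lemma len3: "length xs = 3 \<Longrightarrow> xs = [xs!0, xs!1, xs!2]"
  by (cases xs; cases "tl xs"; cases "tl (tl xs)") auto

lemma low_pp:
  assumes rp: "random_po le" and cd: "lt le c d" and xJ: "lt le c x" "lt le x d" "lt le c y" "lt le y d"
    "lt le c z" "lt le z d"
  shows "Low le x y z \<longleftrightarrow> (\<exists>ys. length ys = 9 \<and> (\<forall>a\<in>set low_atoms. holds_atom (Cycl le) c d ([x,y,z] @ ys) a))"
proof -
  have po: "is_po le" using rp_po[OF rp] .
  have ev: "(\<forall>a\<in>set low_atoms. holds_atom (Cycl le) c d ([x,y,z] @ ys) a) \<longleftrightarrow>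
     Cycl le d c x \<and> Cycl le d c y \<and> Cycl le d c z \<and> Cycl le d c (ys!0) \<and> Cycl le d c (ys!1) \<and> Cycl le d c (ys!2) \<and>
     Cycl le x y (ys!2) \<and> Cycl le x z (ys!1) \<and> Cycl le x (ys!0) (ys!2) \<and> Cycl le z (ys!0) (ys!2) \<and> Cycl le z (ys!1) (ys!2) \<and>
     Cycl le c x (ys!0) \<and> Cycl le c y (ys!2) \<and> Cycl le c z (ys!0) \<and> Cycl le c (ys!1) (ys!2) \<and>
     Cycl le x (ys!1) (ys!3) \<and> Cycl le x (ys!1) (ys!5) \<and> Cycl le x c (ys!5) \<and> Cycl le x d (ys!3) \<and> Cycl le (ys!1) d (ys!4) \<and>
     Cycl le (ys!1) (ys!3) c \<and> Cycl le (ys!1) (ys!5) (ys!4) \<and> Cycl le c (ys!4) (ys!3) \<and> Cycl le c (ys!5) (ys!4) \<and> Cycl le d (ys!4) (ys!3) \<and>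
     Cycl le y z (ys!6) \<and> Cycl le y z (ys!8) \<and> Cycl le y c (ys!8) \<and> Cycl le y d (ys!6) \<and> Cycl le z d (ys!7) \<and>
     Cycl le z (ys!6) c \<and> Cycl le z (ys!8) (ys!7) \<and> Cycl le c (ys!7) (ys!6) \<and> Cycl le c (ys!8) (ys!7) \<and> Cycl le d (ys!7) (ys!6)"
    for ys by (simp add: low_atoms_def gad_def nth_append)
  have JA: "Cycl le d c t \<longleftrightarrow> lt le c t \<and> lt le t d" for t using J_atom[OF po cd] .
  show ?thesis
  proof
    assume L: "Low le x y z"
    obtain u v w where uvw: "lt le c u" "lt le u d" "lt le c v" "lt le v d" "lt le c w" "lt le w d"
      "Cycl le x y w" "Cycl le x z v" "Cycl le x u w" "Cycl le z u w" "Cycl le z v w"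
      "lt le x u" "lt le y w" "lt le z u" "lt le v w" "incomp le x v" "incomp le y z"
      using pure_bwd[OF rp cd xJ L] by blast
    obtain g1 g2 g3 where g: "Cycl le x v g1" "Cycl le x v g3" "Cycl le x c g3" "Cycl le x d g1" "Cycl le v d g2"
      "Cycl le v g1 c" "Cycl le v g3 g2" "Cycl le c g2 g1" "Cycl le c g3 g2" "Cycl le d g2 g1"
      using gadget_bwd[OF rp cd xJ(1,2) uvw(3,4,16)] by blast
    obtain g4 g5 g6 where g': "Cycl le y z g4" "Cycl le y z g6" "Cycl le y c g6" "Cycl le y d g4" "Cycl le z d g5"
      "Cycl le z g4 c" "Cycl le z g6 g5" "Cycl le c g5 g4" "Cycl le c g6 g5" "Cycl le d g5 g4"
      using gadget_bwd[OF rp cd xJ(3,4,5,6) uvw(17)] by blast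
    have Ls: "Cycl le c x u" "Cycl le c y w" "Cycl le c z u" "Cycl le c v w"
      using L_atom[OF po] xJ uvw by blast+
    show "\<exists>ys. length ys = 9 \<and> (\<forall>a\<in>set low_atoms. holds_atom (Cycl le) c d ([x,y,z] @ ys) a)"
      apply (rule exI[of _ "[u,v,w,g1,g2,g3,g4,g5,g6]"])
      unfolding ev using uvw g g' Ls xJ JA by simp
  next
    assume "\<exists>ys. length ys = 9 \<and> (\<forall>a\<in>set low_atoms. holds_atom (Cycl le) c d ([x,y,z] @ ys) a)"
    then obtain ys where ys: "length ys = 9" "\<forall>a\<in>set low_atoms. holds_atom (Cycl le) c d ([x,y,z] @ ys) a" by blast
    define u where "u = ys!0" define v where "v = ys!1" define w where "w = ys!2"
    note E = ys(2)[unfolded ev, folded u_def v_def w_def]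
    have J3: "lt le c u" "lt le u d" "lt le c v" "lt le v d" "lt le c w" "lt le w d" using E JA by blast+
    have Ls: "lt le x u" "lt le y w" "lt le z u" "lt le v w"
      using L_atom[OF po] xJ J3 E by blast+
    have I1: "incomp le x v" using gadget_fwd[OF po xJ(1,2) J3(3,4)] E by blast
    have I2: "incomp le y z" using gadget_fwd[OF po xJ(3,4,5,6)] E by blast
    show "Low le x y z" using pure_fwd[OF po] E Ls I1 I2 by blast
  qed
qed



theorem lemma62:
  fixes le :: "'a \<Rightarrow> 'a \<Rightarrow> bool" and c d :: 'a
  assumes "random_po le"
    and "lt le c d"
  shows "pp_interpretable (Cycl le) c d (Low le)"
proof -
  note rp = assms(1) and cd = assms(2)
  have po: "is_po le" using rp_po[OF rp] .
  define J where "J = Jset le c d"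
  obtain h where hle: "\<forall>x\<in>J. \<forall>y\<in>J. le x y \<longleftrightarrow> le (h x) (h y)" and hsurj: "\<forall>b. \<exists>x\<in>J. h x = b"
    using iso_exists[OF rp cd] J_def by blast
  have hle': "a \<in> J \<Longrightarrow> b \<in> J \<Longrightarrow> le (h a) (h b) \<longleftrightarrow> le a b" for a b using hle by blast
  have heq: "a \<in> J \<Longrightarrow> b \<in> J \<Longrightarrow> h a = h b \<longleftrightarrow> a = b" for a b
    using hle' po_refl[OF po] po_antisym[OF po] by metis
  have hLow: "a \<in> J \<Longrightarrow> b \<in> J \<Longrightarrow> e \<in> J \<Longrightarrow> Low le (h a) (h b) (h e) \<longleftrightarrow> Low le a b e" for a b e
    unfolding Low_def lt_def incomp_def using hle' heq by simp
  have JA: "t \<in> J \<longleftrightarrow> Cycl le d c t" for t using J_atom[OF po cd] J_def by (simp add: Jset_def)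
  define I where "I = (\<lambda>xs::'a list. if length xs = 1 \<and> hd xs \<in> J then Some (h (hd xs)) else None)"
  define Dom where "Dom = {xs. length xs = 1 \<and> I xs \<noteq> None}"
  have Dom_iff: "xs \<in> Dom \<longleftrightarrow> (\<exists>x. xs = [x] \<and> x \<in> J)" for xs
  proof
    assume "xs \<in> Dom"
    then have "length xs = 1" "hd xs \<in> J" unfolding Dom_def I_def by (auto split: if_splits)
    then show "\<exists>x. xs = [x] \<and> x \<in> J" using len1 by metis
  next
    assume "\<exists>x. xs = [x] \<and> x \<in> J" then show "xs \<in> Dom" unfolding Dom_def I_def by auto
  qed
  have I1: "x \<in> J \<Longrightarrow> I [x] = Some (h x)" for x by (simp add: I_def)
  have surj: "\<forall>b. \<exists>xs\<in>Dom. I xs = Some b"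
  proof
    fix b obtain x where "x \<in> J" "h x = b" using hsurj by blast
    then show "\<exists>xs\<in>Dom. I xs = Some b" using Dom_iff I1 by blast
  qed
  have pp1: "pp_definable (Cycl le) c d 1 Dom"
    unfolding pp_definable_def
  proof (intro conjI exI[of _ 0] exI[of _ "[AR CstD CstC (Var 0)]"] allI impI)
    show "Dom \<subseteq> {xs. length xs = 1}" using Dom_iff by auto
    show "\<forall>a\<in>set [AR CstD CstC (Var 0)]. \<forall>i\<in>atom_vars a. i < 1 + 0" by simp
    fix xs :: "'a list" assume "length xs = 1"
    then have xs: "xs = [hd xs]" by (rule len1)
    show "xs \<in> Dom \<longleftrightarrow> (\<exists>ys. length ys = 0 \<and> (\<forall>a\<in>set [AR CstD CstC (Var 0)]. holds_atom (Cycl le) c d (xs @ ys) a))"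
      by (subst xs, subst xs, simp add: Dom_iff JA)
  qed
  have K_iff: "[a,b] \<in> {xs @ ys | xs ys. xs \<in> Dom \<and> ys \<in> Dom \<and> I xs = I ys} \<longleftrightarrow> a \<in> J \<and> b \<in> J \<and> a = b" for a b
  proof
    assume "[a,b] \<in> {xs @ ys | xs ys. xs \<in> Dom \<and> ys \<in> Dom \<and> I xs = I ys}"
    then obtain xs ys where A: "[a,b] = xs @ ys" "xs \<in> Dom" "ys \<in> Dom" "I xs = I ys" by blast
    obtain x where x: "xs = [x]" "x \<in> J" using A(2) Dom_iff by blast
    obtain y where y: "ys = [y]" "y \<in> J" using A(3) Dom_iff by blast
    have "[a,b] = [x] @ [y]" "x \<in> J" "y \<in> J" "I [x] = I [y]" using A x y by simp_all
    then show "a \<in> J \<and> b \<in> J \<and> a = b" using I1 heq by auto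
  next
    assume ab: "a \<in> J \<and> b \<in> J \<and> a = b"
    then have "[a,b] = [a] @ [b]" "[a] \<in> Dom" "[b] \<in> Dom" "I [a] = I [b]" using Dom_iff by auto
    then show "[a,b] \<in> {xs @ ys | xs ys. xs \<in> Dom \<and> ys \<in> Dom \<and> I xs = I ys}" by blast
  qed
  have pp2: "pp_definable (Cycl le) c d (2 * 1) {xs @ ys | xs ys. xs \<in> Dom \<and> ys \<in> Dom \<and> I xs = I ys}"
    unfolding pp_definable_def
  proof (intro conjI exI[of _ 0] exI[of _ "[AR CstD CstC (Var 0), AR CstD CstC (Var 1), AEq (Var 0) (Var 1)]"] allI impI)
    show "{xs @ ys | xs ys. xs \<in> Dom \<and> ys \<in> Dom \<and> I xs = I ys} \<subseteq> {xs. length xs = 2 * 1}" using Dom_iff by auto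
    show "\<forall>a\<in>set [AR CstD CstC (Var 0), AR CstD CstC (Var 1), AEq (Var 0) (Var 1)]. \<forall>i\<in>atom_vars a. i < 2 * 1 + 0" by simp
    fix xs :: "'a list" assume "length xs = 2 * 1"
    then have xs: "xs = [xs!0, xs!1]" using len2 by simp
    show "xs \<in> {xs @ ys | xs ys. xs \<in> Dom \<and> ys \<in> Dom \<and> I xs = I ys} \<longleftrightarrow> (\<exists>ys. length ys = 0 \<and>
       (\<forall>a\<in>set [AR CstD CstC (Var 0), AR CstD CstC (Var 1), AEq (Var 0) (Var 1)]. holds_atom (Cycl le) c d (xs @ ys) a))"
      by (subst xs, subst xs, simp only: K_iff, simp add: JA)
  qed
  have L_iff: "[a,b,e] \<in> {xs @ ys @ zs | xs ys zs. xs \<in> Dom \<and> ys \<in> Dom \<and> zs \<in> Dom \<and>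
               Low le (the (I xs)) (the (I ys)) (the (I zs))} \<longleftrightarrow> a \<in> J \<and> b \<in> J \<and> e \<in> J \<and> Low le a b e" for a b e
  proof
    assume "[a,b,e] \<in> {xs @ ys @ zs | xs ys zs. xs \<in> Dom \<and> ys \<in> Dom \<and> zs \<in> Dom \<and>
               Low le (the (I xs)) (the (I ys)) (the (I zs))}"
    then obtain xs ys zs where "[a,b,e] = xs @ ys @ zs" "xs \<in> Dom" "ys \<in> Dom" "zs \<in> Dom"
       "Low le (the (I xs)) (the (I ys)) (the (I zs))" by blast
    note A = this
    obtain x where x: "xs = [x]" "x \<in> J" using A(2) Dom_iff by blast
    obtain y where y: "ys = [y]" "y \<in> J" using A(3) Dom_iff by blast
    obtain z where z: "zs = [z]" "z \<in> J" using A(4) Dom_iff by blast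
    have "[a,b,e] = [x] @ [y] @ [z]" "x \<in> J" "y \<in> J" "z \<in> J"
       "Low le (the (I [x])) (the (I [y])) (the (I [z]))" using A x y z by simp_all
    then show "a \<in> J \<and> b \<in> J \<and> e \<in> J \<and> Low le a b e" using I1 hLow by auto
  next
    assume ab: "a \<in> J \<and> b \<in> J \<and> e \<in> J \<and> Low le a b e"
    then have "[a,b,e] = [a] @ [b] @ [e]" "[a] \<in> Dom" "[b] \<in> Dom" "[e] \<in> Dom"
      "Low le (the (I [a])) (the (I [b])) (the (I [e]))" using Dom_iff I1 hLow by auto
    then show "[a,b,e] \<in> {xs @ ys @ zs | xs ys zs. xs \<in> Dom \<and> ys \<in> Dom \<and> zs \<in> Dom \<and>
               Low le (the (I xs)) (the (I ys)) (the (I zs))}" by blast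
  qed
  have pp3: "pp_definable (Cycl le) c d (3 * 1) {xs @ ys @ zs | xs ys zs. xs \<in> Dom \<and> ys \<in> Dom \<and> zs \<in> Dom \<and>
               Low le (the (I xs)) (the (I ys)) (the (I zs))}"
    unfolding pp_definable_def
  proof (intro conjI exI[of _ 9] exI[of _ low_atoms] allI impI)
    show "{xs @ ys @ zs | xs ys zs. xs \<in> Dom \<and> ys \<in> Dom \<and> zs \<in> Dom \<and>
               Low le (the (I xs)) (the (I ys)) (the (I zs))} \<subseteq> {xs. length xs = 3 * 1}" using Dom_iff by auto
    show "\<forall>a\<in>set low_atoms. \<forall>i\<in>atom_vars a. i < 3 * 1 + 9" by (simp add: low_atoms_def gad_def)
    fix xs :: "'a list" assume "length xs = 3 * 1"
    then have xs: "xs = [xs!0, xs!1, xs!2]" using len3 by simp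
    have "[xs!0, xs!1, xs!2] \<in> {xs @ ys @ zs | xs ys zs. xs \<in> Dom \<and> ys \<in> Dom \<and> zs \<in> Dom \<and>
               Low le (the (I xs)) (the (I ys)) (the (I zs))} \<longleftrightarrow>
          (\<exists>ys. length ys = 9 \<and> (\<forall>a\<in>set low_atoms. holds_atom (Cycl le) c d ([xs!0, xs!1, xs!2] @ ys) a))"
    proof (cases "xs!0 \<in> J \<and> xs!1 \<in> J \<and> xs!2 \<in> J")
      case True
      then have "lt le c (xs!0)" "lt le (xs!0) d" "lt le c (xs!1)" "lt le (xs!1) d" "lt le c (xs!2)" "lt le (xs!2) d"
        by (auto simp: J_def Jset_def)
      then show ?thesis unfolding L_iff using True low_pp[OF rp cd] by blast
    next
      case False
      have "\<not> (\<forall>a\<in>set low_atoms. holds_atom (Cycl le) c d ([xs!0, xs!1, xs!2] @ ys) a)" for ys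
      proof
        assume H: "\<forall>a\<in>set low_atoms. holds_atom (Cycl le) c d ([xs!0, xs!1, xs!2] @ ys) a"
        have m: "AR CstD CstC (Var 0) \<in> set low_atoms" "AR CstD CstC (Var 1) \<in> set low_atoms"
          "AR CstD CstC (Var 2) \<in> set low_atoms" by (simp_all add: low_atoms_def)
        have "Cycl le d c (xs!0)" "Cycl le d c (xs!1)" "Cycl le d c (xs!2)"
          using H[rule_format, OF m(1)] H[rule_format, OF m(2)] H[rule_format, OF m(3)] by simp_all
        then show False using False JA by blast
      qed
      then show ?thesis unfolding L_iff using False by blast
    qed
    then show "xs \<in> {xs @ ys @ zs | xs ys zs. xs \<in> Dom \<and> ys \<in> Dom \<and> zs \<in> Dom \<and>
               Low le (the (I xs)) (the (I ys)) (the (I zs))} \<longleftrightarrow>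
          (\<exists>ys. length ys = 9 \<and> (\<forall>a\<in>set low_atoms. holds_atom (Cycl le) c d (xs @ ys) a))"
      by (simp only: xs[symmetric])
  qed
  show ?thesis
    unfolding pp_interpretable_def Let_def
    apply (rule exI[of _ 1], rule exI[of _ I])
    using surj pp1 pp2 pp3 unfolding Dom_def by simp
qed

end
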